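(* Let $L>0$, $N\in\mathbb{N}_+$, $h=L/N$, and let $\epsilon>0$, $\theta_0>0$, $\tau>0$, $\alpha\in(0,1)$. Let $u^n\in\mathcal{C}_{per}$ satisfy $-1<u^n<1$ pointwise. Then the Lagrange function $$\mathcal{L}(u_1,w_1,u_2,w_2,u_3,w_3)=Z_1(u_1,w_1)+Z_2(u_2,w_2)+\langle u_3,u_1-u_2\rangle-\langle w_3,w_1-w_2\rangle$$ has a stationary point, i.e. there exist $u_1^*,w_1^*,u_2^*,w_2^*,u_3^*,w_3^*\in\mathcal{C}_{per}$ with $-1<u_2^*<1$ pointwise such that $$-\epsilon^2\Delta_h u_1^*-\alpha w_1^*+u_3^*=0,\qquad \alpha(-u_1^*+u^n)+\tau\Delta_h w_1^*-w_3^*=0,$$ $$\log(1+u_2^* )-\log(1-u_2^* )-\theta_0u^n-(1-\alpha)w_2^*-u_3^*=0,\qquad (1-\alpha)(-u_2^*+u^n)+w_3^*=0,$$ $$u_1^*-u_2^*=0,\qquad w_1^*-w_2^*=0.$$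
   Context: $\mathcal{C}_{per}$ is the space of real grid functions $\nu=(\nu_{i,j,k})_{i,j,k\in\mathbb{Z}}$ that are $N$-periodic in each index ($\nu_{i,j,k}$ is the value at the cell centre $((i-\frac12)h,(j-\frac12)h,(k-\frac12)h)$ of $(0,L)^3$). Inner product: $\langle\nu,\xi\rangle=h^2\sum_{i,j,k=1}^N\nu_{i,j,k}\xi_{i,j,k}$, $\|\nu\|_2=\langle\nu,\nu\rangle^{1/2}$. Discrete Laplacian: $(\Delta_h\nu)_{i,j,k}=h^{-2}(\nu_{i+1,j,k}+\nu_{i-1,j,k}+\nu_{i,j+1,k}+\nu_{i,j-1,k}+\nu_{i,j,k+1}+\nu_{i,j,k-1}-6\nu_{i,j,k})$. Discrete gradient norm: $\|\nabla_h\nu\|_2^2=h^2\sum_{i,j,k=1}^N h^{-2}\big[(\nu_{i+1,j,k}-\nu_{i,j,k})^2+(\nu_{i,j+1,k}-\nu_{i,j,k})^2+(\nu_{i,j,k+1}-\nu_{i,j,k})^2\big]$. Logarithms, products and inequalities of grid functions are pointwise; $1$ denotes the constant grid function. $Z_1(u,w)=\frac{\epsilon^2}{2}\|\nabla_h u\|_2^2-\alpha\langle u-u^n,w\rangle-\frac{\tau}{2}\|\nabla_h w\|_2^2$ and, for $-1<u<1$ pointwise, $Z_2(u,w)=\langle 1+u,\log(1+u)\rangle+\langle 1-u,\log(1-u)\rangle-\theta_0\langle u^n,u\rangle-(1-\alpha)\langle u-u^n,w\rangle$. The displayed system is the vanishing of all partial gradients of $\mathcal{L}$ (the definition of a stationary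 point). *)

theory Defs
  imports Complex_Main
begin

text \<open>Grid functions on the cell centres, indexed by integer triples.
  The space C_per consists of those that are N-periodic in each index.\<close>

type_synonym grid = "int \<times> int \<times> int \<Rightarrow> real"

definition periodic_grid :: "nat \<Rightarrow> grid \<Rightarrow> bool" where
  "periodic_grid N v \<longleftrightarrow>
     (\<forall>i j k. v (i + int N, j, k) = v (i, j, k)
            \<and> v (i, j + int N, k) = v (i, j, k)
            \<and> v (i, j, k + int N) = v (i, j, k))"

definition lap_h :: "real \<Rightarrow> grid \<Rightarrow> grid" where
  "lap_h h v = (\<lambda>(i, j, k).
     (v (i + 1, j, k) + v (i - 1, j, k) + v (i, j + 1, k) + v (i, j - 1, k)
      + v (i, j, k + 1) + v (i, j, k - 1) - 6 * v (i, j, k)) / h\<^sup>2)"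

end

theory Submission
  imports Defs "HOL-Analysis.Analysis" "HOL-Real_Asymp.Real_Asymp"
begin


lemma per_shift:
  assumes "periodic_grid N v"
  shows "v (i + c * int N, j, k) = v (i, j, k)" "v (i, j + c * int N, k) = v (i, j, k)"
    "v (i, j, k + c * int N) = v (i, j, k)"
proof -
  have P: "v (i + int N, j, k) = v (i, j, k)" "v (i, j + int N, k) = v (i, j, k)"
    "v (i, j, k + int N) = v (i, j, k)" for i j k
    using assms unfolding periodic_grid_def by auto
  show "v (i + c * int N, j, k) = v (i, j, k)"
  proof (induct c rule: int_induct[where k=0])
    case base then show ?case by simp
  next
    case (step1 c) then show ?case using P(1)[of "i + c * int N" j k] by (simp add: algebra_simps)
  next
    case (step2 c) then show ?case using P(1)[of "i + (c - 1) * int N" j k] by (simp add: algebra_simps)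
  qed
  show "v (i, j + c * int N, k) = v (i, j, k)"
  proof (induct c rule: int_induct[where k=0])
    case base then show ?case by simp
  next
    case (step1 c) then show ?case using P(2)[of i "j + c * int N" k] by (simp add: algebra_simps)
  next
    case (step2 c) then show ?case using P(2)[of i "j + (c - 1) * int N" k] by (simp add: algebra_simps)
  qed
  show "v (i, j, k + c * int N) = v (i, j, k)"
  proof (induct c rule: int_induct[where k=0])
    case base then show ?case by simp
  next
    case (step1 c) then show ?case using P(3)[of i j "k + c * int N"] by (simp add: algebra_simps)
  next
    case (step2 c) then show ?case using P(3)[of i j "k + (c - 1) * int N"] by (simp add: algebra_simps)
  qed
qed

definition gbox :: "nat \<Rightarrow> (int \<times> int \<times> int) set" where
  "gbox N = {0..<int N} \<times> {0..<int N} \<times> {0..<int N}"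

definition pm :: "nat \<Rightarrow> int \<times> int \<times> int \<Rightarrow> int \<times> int \<times> int" where
  "pm N p = (case p of (i, j, k) \<Rightarrow> (i mod int N, j mod int N, k mod int N))"

lemma finite_box[simp]: "finite (gbox N)" by (simp add: gbox_def)

lemma box_ne: "N \<ge> 1 \<Longrightarrow> gbox N \<noteq> {}"
  by (auto simp: gbox_def)

lemma pm_box: "N \<ge> 1 \<Longrightarrow> pm N p \<in> gbox N"
  by (cases p) (auto simp: gbox_def pm_def)

lemma per_pm:
  assumes "periodic_grid N v"
  shows "v (pm N p) = v p"
proof -
  obtain i j k where p: "p = (i, j, k)" by (cases p) auto
  have "v (i mod int N + (i div int N) * int N, j mod int N + (j div int N) * int N, k mod int N + (k div int N) * int N)
      = v (i mod int N, j mod int N, k mod int N)"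
    using per_shift[OF assms] by metis
  moreover have "i mod int N + (i div int N) * int N = i" "j mod int N + (j div int N) * int N = j"
     "k mod int N + (k div int N) * int N = k" by (simp_all add: mod_div_mult_eq)
  ultimately have "v (i mod int N, j mod int N, k mod int N) = v (i, j, k)" by simp
  then show ?thesis by (simp add: p pm_def)
qed

lemma per_comp1: "periodic_grid N a \<Longrightarrow> periodic_grid N (\<lambda>p. F (a p))"
  by (simp add: periodic_grid_def)

lemma per_comp2: "periodic_grid N a \<Longrightarrow> periodic_grid N b \<Longrightarrow> periodic_grid N (\<lambda>p. F (a p) (b p))"
  by (simp add: periodic_grid_def)

lemma per_const: "periodic_grid N (\<lambda>p. c)"
  by (simp add: periodic_grid_def)

lemma per_lap: "periodic_grid N v \<Longrightarrow> periodic_grid N (lap_h h v)"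
  unfolding periodic_grid_def lap_h_def
  apply (simp add: split_def)
  apply (intro allI conjI)
  apply (metis (no_types, lifting) add.commute add.left_commute diff_add_eq)+
  done

lemma lap_lin: "lap_h h (\<lambda>p. a p + c * b p) = (\<lambda>p. lap_h h a p + c * lap_h h b p)"
  unfolding lap_h_def by (cases "h = 0") (auto simp: fun_eq_iff field_simps)

lemma lap_diff: "lap_h h (\<lambda>p. a p - b p) = (\<lambda>p. lap_h h a p - lap_h h b p)"
  unfolding lap_h_def by (cases "h = 0") (auto simp: fun_eq_iff field_simps)

lemma lap_addc: "lap_h h (\<lambda>p. a p + c) = lap_h h a"
  unfolding lap_h_def by (cases "h = 0") (auto simp: fun_eq_iff field_simps)

lemma lap_neg: "lap_h h (\<lambda>p. - a p) = (\<lambda>p. - lap_h h a p)"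
  unfolding lap_h_def by (cases "h = 0") (auto simp: fun_eq_iff field_simps)




definition dirs :: "(int \<times> int \<times> int) set" where
  "dirs = {(1,0,0),(-1,0,0),(0,1,0),(0,-1,0),(0,0,1),(0,0,-1)}"

lemma dirs_neg: "uminus ` dirs = dirs"
  unfolding dirs_def by auto

lemma card_dirs: "card dirs = 6" unfolding dirs_def by simp

lemma finite_dirs[simp]: "finite dirs" unfolding dirs_def by simp

lemma lap_alt: "lap_h h v p = ((\<Sum>d\<in>dirs. v (p + d)) - 6 * v p) / h\<^sup>2"
  by (cases p) (simp add: lap_h_def dirs_def algebra_simps)

lemma per_shiftd: "periodic_grid N f \<Longrightarrow> periodic_grid N (\<lambda>p. f (p + d))"
proof -
  assume H: "periodic_grid N f"
  obtain a b c where d: "d = (a, b, c)" by (cases d) auto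
  have "f (i + a + int N, j + b, k + c) = f (i + a, j + b, k + c) \<and>
        f (i + a, j + b + int N, k + c) = f (i + a, j + b, k + c) \<and>
        f (i + a, j + b, k + c + int N) = f (i + a, j + b, k + c)" for i j k
    using H unfolding periodic_grid_def by blast
  then show ?thesis unfolding periodic_grid_def d by (simp add: algebra_simps)
qed

lemma pm_add: "pm N (pm N p + d) = pm N (p + d)"
  by (cases p, cases d) (simp add: pm_def mod_add_left_eq)

lemma pm_id: "p \<in> gbox N \<Longrightarrow> pm N p = p"
  by (cases p) (auto simp: pm_def gbox_def)

lemma sum_shift:
  assumes "periodic_grid N f" "N \<ge> 1"
  shows "(\<Sum>p\<in>gbox N. f (p + d)) = (\<Sum>p\<in>gbox N. f p)"
proof -
  have "(\<Sum>p\<in>gbox N. f (p + d)) = (\<Sum>p\<in>gbox N. f (pm N (p + d)))"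
    using per_pm[OF assms(1)] by simp
  also have "\<dots> = (\<Sum>p\<in>gbox N. f p)"
  proof (rule sum.reindex_bij_witness[of _ "\<lambda>q. pm N (q - d)" "\<lambda>p. pm N (p + d)"])
    fix a assume a: "a \<in> gbox N"
    show "pm N (pm N (a + d) - d) = a"
      using pm_add[of N "a + d" "- d"] pm_id[OF a] by simp
    show "pm N (a + d) \<in> gbox N" using pm_box[OF assms(2)] .
  next
    fix a assume a: "a \<in> gbox N"
    show "pm N (pm N (a - d) + d) = a"
      using pm_add[of N "a - d" "d"] pm_id[OF a] by simp
    show "pm N (a - d) \<in> gbox N" using pm_box[OF assms(2)] .
  qed simp
  finally show ?thesis .
qed

lemma sum_mul_lap:
  "(\<Sum>p\<in>gbox N. a p * lap_h h b p) = ((\<Sum>p\<in>gbox N. a p * (\<Sum>d\<in>dirs. b (p + d))) - 6 * (\<Sum>p\<in>gbox N. a p * b p)) / h\<^sup>2"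
proof -
  have "a p * lap_h h b p = (a p * (\<Sum>d\<in>dirs. b (p + d)) - 6 * (a p * b p)) / h\<^sup>2" for p
    by (simp add: lap_alt algebra_simps)
  then have "(\<Sum>p\<in>gbox N. a p * lap_h h b p) = (\<Sum>p\<in>gbox N. (a p * (\<Sum>d\<in>dirs. b (p + d)) - 6 * (a p * b p)) / h\<^sup>2)"
    by simp
  also have "\<dots> = ((\<Sum>p\<in>gbox N. a p * (\<Sum>d\<in>dirs. b (p + d))) - 6 * (\<Sum>p\<in>gbox N. a p * b p)) / h\<^sup>2"
    by (simp add: sum_divide_distrib[symmetric] sum_subtractf sum_distrib_left)
  finally show ?thesis .
qed

lemma lap_sym:
  assumes "periodic_grid N a" "periodic_grid N b" "N \<ge> 1"
  shows "(\<Sum>p\<in>gbox N. a p * lap_h h b p) = (\<Sum>p\<in>gbox N. b p * lap_h h a p)"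
proof -
  have S: "(\<Sum>p\<in>gbox N. a p * b (p + d)) = (\<Sum>p\<in>gbox N. a (p - d) * b p)" for d
  proof -
    have "periodic_grid N (\<lambda>p. a (p - d) * b p)"
      using per_comp2[OF per_shiftd[OF assms(1), of "- d"] assms(2), of "(*)"] by simp
    from sum_shift[OF this assms(3), of d] show ?thesis by simp
  qed
  have "(\<Sum>p\<in>gbox N. a p * (\<Sum>d\<in>dirs. b (p + d))) = (\<Sum>d\<in>dirs. \<Sum>p\<in>gbox N. a p * b (p + d))"
    by (simp add: sum_distrib_left sum.swap[of _ dirs])
  also have "\<dots> = (\<Sum>d\<in>dirs. \<Sum>p\<in>gbox N. a (p - d) * b p)" using S by simp
  also have "\<dots> = (\<Sum>d\<in>uminus ` dirs. \<Sum>p\<in>gbox N. a (p + d) * b p)"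
    by (subst sum.reindex) (auto simp: inj_on_def)
  also have "\<dots> = (\<Sum>p\<in>gbox N. b p * (\<Sum>d\<in>dirs. a (p + d)))"
    by (simp add: dirs_neg sum_distrib_left sum.swap[of _ dirs] mult.commute)
  finally have X: "(\<Sum>p\<in>gbox N. a p * (\<Sum>d\<in>dirs. b (p + d))) = (\<Sum>p\<in>gbox N. b p * (\<Sum>d\<in>dirs. a (p + d)))" .
  have "(\<Sum>p\<in>gbox N. a p * lap_h h b p) = ((\<Sum>p\<in>gbox N. a p * (\<Sum>d\<in>dirs. b (p + d))) - 6 * (\<Sum>p\<in>gbox N. a p * b p)) / h\<^sup>2"
    by (rule sum_mul_lap)
  also have "\<dots> = ((\<Sum>p\<in>gbox N. b p * (\<Sum>d\<in>dirs. a (p + d))) - 6 * (\<Sum>p\<in>gbox N. b p * a p)) / h\<^sup>2"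
    by (simp add: X mult.commute)
  also have "\<dots> = (\<Sum>p\<in>gbox N. b p * lap_h h a p)"
    by (rule sum_mul_lap[symmetric])
  finally show ?thesis .
qed

lemma lap_mass:
  assumes "periodic_grid N a" "N \<ge> 1"
  shows "(\<Sum>p\<in>gbox N. lap_h h a p) = 0"
  using lap_sym[OF assms(1) per_const[of N 1] assms(2), of h]
  by (simp add: lap_h_def split_def)

lemma lap_energy:
  assumes "periodic_grid N z" "N \<ge> 1"
  shows "(\<Sum>p\<in>gbox N. z p * lap_h h z p) = - (\<Sum>p\<in>gbox N. \<Sum>d\<in>dirs. (z (p + d) - z p)\<^sup>2) / (2 * h\<^sup>2)"
proof -
  have S: "(\<Sum>p\<in>gbox N. (z (p + d))\<^sup>2) = (\<Sum>p\<in>gbox N. (z p)\<^sup>2)" for d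
    using sum_shift[OF per_comp1[OF assms(1)] assms(2), of "\<lambda>x. x\<^sup>2" d] by simp
  have "(\<Sum>p\<in>gbox N. \<Sum>d\<in>dirs. (z (p + d) - z p)\<^sup>2)
     = (\<Sum>d\<in>dirs. \<Sum>p\<in>gbox N. (z (p + d))\<^sup>2) - 2 * (\<Sum>p\<in>gbox N. z p * (\<Sum>d\<in>dirs. z (p + d)))
       + 6 * (\<Sum>p\<in>gbox N. (z p)\<^sup>2)"
    by (simp add: power2_diff sum.distrib sum_subtractf sum_distrib_left card_dirs sum.swap[of _ dirs]
        algebra_simps)
  also have "\<dots> = 12 * (\<Sum>p\<in>gbox N. (z p)\<^sup>2) - 2 * (\<Sum>p\<in>gbox N. z p * (\<Sum>d\<in>dirs. z (p + d)))"
    by (simp add: S card_dirs)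
  finally have E: "(\<Sum>p\<in>gbox N. \<Sum>d\<in>dirs. (z (p + d) - z p)\<^sup>2) = 12 * (\<Sum>p\<in>gbox N. (z p)\<^sup>2) - 2 * (\<Sum>p\<in>gbox N. z p * (\<Sum>d\<in>dirs. z (p + d)))" .
  have Q: "(\<Sum>p\<in>gbox N. z p * z p) = (\<Sum>p\<in>gbox N. (z p)\<^sup>2)" by (simp add: power2_eq_square)
  have X: "(\<Sum>p\<in>gbox N. z p * (\<Sum>d\<in>dirs. z (p + d))) - 6 * (\<Sum>p\<in>gbox N. (z p)\<^sup>2)
     = - (\<Sum>p\<in>gbox N. \<Sum>d\<in>dirs. (z (p + d) - z p)\<^sup>2) / 2" using E by linarith
  show ?thesis
    unfolding sum_mul_lap Q X by simp
qed



lemma conn: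
  assumes "P (a, b, c)" "\<And>p d. P p \<Longrightarrow> d \<in> dirs \<Longrightarrow> P (p + d)"
  shows "P q"
proof -
  have st: "P (i + 1, j, k)" "P (i - 1, j, k)" "P (i, j + 1, k)" "P (i, j - 1, k)"
     "P (i, j, k + 1)" "P (i, j, k - 1)" if "P (i, j, k)" for i j k
    using assms(2)[OF that, of "(1,0,0)"] assms(2)[OF that, of "(-1,0,0)"]
      assms(2)[OF that, of "(0,1,0)"] assms(2)[OF that, of "(0,-1,0)"]
      assms(2)[OF that, of "(0,0,1)"] assms(2)[OF that, of "(0,0,-1)"]
    by (auto simp: dirs_def)
  obtain x y z where q: "q = (x, y, z)" by (cases q) auto
  have A: "P (i, b, c)" for i
    by (induct i rule: int_induct[where k=a]) (use assms(1) st in auto)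
  have B: "P (i, j, c)" for i j
    by (induct j rule: int_induct[where k=b]) (use A st in auto)
  have C: "P (i, j, k)" for i j k
    by (induct k rule: int_induct[where k=c]) (use B st in auto)
  show ?thesis using C q by simp
qed

lemma liouville:
  assumes "periodic_grid N z" "N \<ge> 1" "h \<noteq> 0" "\<And>p. lap_h h z p = 0"
  shows "z q = z (0, 0, 0)"
proof -
  define M where "M = Max (z ` gbox N)"
  have fin: "finite (z ` gbox N)" "z ` gbox N \<noteq> {}" using box_ne[OF assms(2)] by auto
  obtain p0 where p0: "p0 \<in> gbox N" "z p0 = M" using Max_in[OF fin] unfolding M_def by auto
  have le: "z p \<le> M" for p
  proof -
    have "z (pm N p) \<le> M" unfolding M_def using Max_ge[OF fin(1)] pm_box[OF assms(2)] by auto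
    then show ?thesis using per_pm[OF assms(1)] by simp
  qed
  have all: "z p = M" for p
  proof (rule conn[of "\<lambda>p. z p = M" "fst p0" "fst (snd p0)" "snd (snd p0)"])
    show "z (fst p0, fst (snd p0), snd (snd p0)) = M" using p0 by simp
  next
    fix p d assume zp: "z p = M" and d: "d \<in> dirs"
    have "(\<Sum>d\<in>dirs. z (p + d)) - 6 * z p = 0"
      using assms(4)[of p] assms(3) unfolding lap_alt by simp
    then have "(\<Sum>d\<in>dirs. M - z (p + d)) = 0"
      using zp by (simp add: sum_subtractf card_dirs)
    then have "\<forall>d\<in>dirs. M - z (p + d) = 0"
      using sum_nonneg_eq_0_iff[of dirs "\<lambda>d. M - z (p + d)"] le by simp
    then show "z (p + d) = M" using d by simp
  qed
  show ?thesis using all[of q] all[of "(0,0,0)"] by simp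
qed

definition phi :: "real \<Rightarrow> real" where
  "phi x = (1 + x) * ln (1 + x) + (1 - x) * ln (1 - x)"

definition dphi :: "real \<Rightarrow> real" where
  "dphi x = ln (1 + x) - ln (1 - x)"

lemma phi_even: "phi (- x) = phi x"
  by (simp add: phi_def)

lemma phi_deriv: "-1 < x \<Longrightarrow> x < 1 \<Longrightarrow> (phi has_real_derivative dphi x) (at x)"
  unfolding phi_def dphi_def
  by (rule derivative_eq_intros refl | simp)+

lemma xlnx_lim: "((\<lambda>x::real. x * ln x) \<longlongrightarrow> 0) (at_right 0)"
  by real_asymp

lemma xlnx_cont: "continuous_on {0..2} (\<lambda>x::real. x * ln x)"
proof -
  have "continuous (at x within {0..2}) (\<lambda>x::real. x * ln x)" if "x \<in> {0..2}" for x
  proof (cases "x = 0")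
    case True
    have "((\<lambda>x::real. x * ln x) \<longlongrightarrow> 0 * ln 0) (at 0 within {0..2})"
      using xlnx_lim at_within_Icc_at_right[of "0::real" 2] by simp
    then show ?thesis using True by (simp add: continuous_within)
  next
    case False
    then have "x > 0" using that by auto
    then have "isCont (\<lambda>x::real. x * ln x) x"
      by (intro continuous_intros) auto
    then show ?thesis using continuous_at_imp_continuous_at_within by blast
  qed
  then show ?thesis using continuous_on_eq_continuous_within by blast
qed

lemma phi_cont: "continuous_on {-1..1} phi"
proof -
  have c1: "continuous_on {-1..1} (\<lambda>x::real. (1 + x) * ln (1 + x))"
    by (rule continuous_on_compose2[OF xlnx_cont, of _ "\<lambda>x. 1 + x"]) (auto intro: continuous_intros)
  have c2: "continuous_on {-1..1} (\<lambda>x::real. (1 - x) * ln (1 - x))"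
    by (rule continuous_on_compose2[OF xlnx_cont, of _ "\<lambda>x. 1 - x"]) (auto intro: continuous_intros)
  show ?thesis unfolding phi_def by (intro continuous_on_add c1 c2)
qed

lemma dphi_mono: "-1 < x \<Longrightarrow> x \<le> y \<Longrightarrow> y < 1 \<Longrightarrow> dphi x \<le> dphi y"
  unfolding dphi_def by (smt (verit) ln_le_cancel_iff)

lemma ylny: "0 \<le> y \<Longrightarrow> y - 1 \<le> y * ln (y::real)"
proof (cases "y = 0")
  case False
  assume "0 \<le> y"
  then have y: "y > 0" using False by simp
  have "ln (1 / y) \<le> 1 / y - 1" using ln_le_minus_one[of "1/y"] y by simp
  then have "- ln y \<le> 1 / y - 1" using y by (simp add: ln_div)
  then have "y * (- ln y) \<le> y * (1 / y - 1)" using y by (intro mult_left_mono) auto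
  moreover have "y * (1 / y - 1) = 1 - y" using y by (simp add: field_simps)
  ultimately show ?thesis by linarith
qed simp

lemma phi_nonneg: "-1 \<le> x \<Longrightarrow> x \<le> 1 \<Longrightarrow> 0 \<le> phi x"
  using ylny[of "1 + x"] ylny[of "1 - x"] unfolding phi_def by linarith

lemma phi_MVT:
  assumes "-1 \<le> a" "a < b" "b \<le> 1"
  shows "\<exists>z. a < z \<and> z < b \<and> phi b - phi a = (b - a) * dphi z"
proof -
  have "continuous_on {a..b} phi" using continuous_on_subset[OF phi_cont] assms by auto
  moreover have "phi differentiable (at x)" if "a < x" "x < b" for x
    using phi_deriv[of x] that assms real_differentiable_def by fastforce
  ultimately obtain l z where "a < z" "z < b" "DERIV phi z :> l" "phi b - phi a = (b - a) * l"
    using MVT[OF assms(2)] by blast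
  moreover have "DERIV phi z :> dphi z" using phi_deriv[of z] \<open>a < z\<close> \<open>z < b\<close> assms by simp
  ultimately show ?thesis using DERIV_unique by blast
qed

lemma phi_top:
  assumes "0 \<le> s" "s \<le> 1"
  shows "phi (1 - s) - phi 1 \<le> - s * (ln (2 - s) - ln s)"
proof (cases "s = 0")
  case False
  then have s: "s > 0" using assms by simp
  obtain z where z: "1 - s < z" "z < 1" "phi 1 - phi (1 - s) = s * dphi z"
    using phi_MVT[of "1 - s" 1] s assms by auto
  have "ln (2 - s) \<le> ln (1 + z)" using z assms by (subst ln_le_cancel_iff) auto
  moreover have "ln (1 - z) \<le> ln s" using z assms by (subst ln_le_cancel_iff) auto
  ultimately have "ln (2 - s) - ln s \<le> dphi z" unfolding dphi_def by simp
  then have "s * (ln (2 - s) - ln s) \<le> s * dphi z" using s by (intro mult_left_mono) auto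
  then show ?thesis using z by linarith
qed simp

lemma phi_top_nonpos:
  assumes "0 \<le> s" "s \<le> 1"
  shows "phi (1 - s) - phi 1 \<le> 0"
proof -
  have "ln s \<le> ln (2 - s)" if "s > 0" using that assms by (subst ln_le_cancel_iff) auto
  then have "0 \<le> s * (ln (2 - s) - ln s)" using assms by (cases "s = 0") auto
  then show ?thesis using phi_top[OF assms] by simp
qed

lemma phi_up:
  assumes "-1 \<le> u" "0 \<le> \<delta>" "u + \<delta> \<le> b" "b < 1"
  shows "phi (u + \<delta>) - phi u \<le> \<delta> * \<bar>dphi b\<bar>"
proof (cases "\<delta> = 0")
  case False
  then have d: "\<delta> > 0" using assms by simp
  obtain z where z: "u < z" "z < u + \<delta>" "phi (u + \<delta>) - phi u = \<delta> * dphi z"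
    using phi_MVT[of u "u + \<delta>"] d assms by auto
  have "dphi z \<le> dphi b" using z assms by (intro dphi_mono) auto
  then have "dphi z \<le> \<bar>dphi b\<bar>" by simp
  then show ?thesis using z d by (simp add: mult_left_mono)
qed simp



lemma lap_scale: "lap_h h (\<lambda>p. c * a p) = (\<lambda>p. c * lap_h h a p)"
  using lap_lin[of h "\<lambda>p. 0" c a] by (simp add: lap_h_def)

lemma cont_eval[continuous_intros]: "continuous_on S (\<lambda>w::grid. w p)"
  by (rule continuous_on_subset[OF continuous_on_product_coordinates]) simp

lemma cont_lap[continuous_intros]: "continuous_on S (\<lambda>w::grid. lap_h h w p)"
  by (cases p) (simp add: lap_h_def divide_inverse, intro continuous_intros)

lemma sum4: "(\<Sum>p\<in>S. X p + (t::real) * Y p + t\<^sup>2 * Z p + W p) = sum X S + sum Y S * t + sum Z S * t\<^sup>2 + sum W S"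
  unfolding sum.distrib sum_distrib_left[symmetric] by (simp add: mult.commute)

locale chsys =
  fixes N :: nat and h \<tau> \<epsilon> \<theta> :: real and un :: grid
  assumes N1: "N \<ge> 1" and hpos: "h > 0" and taupos: "\<tau> > 0"
    and unper: "periodic_grid N un" and unb: "\<And>p. - 1 < un p \<and> un p < 1"
begin

definition U :: "grid \<Rightarrow> grid" where
  "U w = (\<lambda>p. un p + \<tau> * lap_h h w p)"

definition K :: "grid \<Rightarrow> real" where
  "K w = (\<Sum>p\<in>gbox N. phi (U w p) - \<theta> * un p * U w p - \<epsilon>\<^sup>2 / 2 * U w p * lap_h h (U w) p
            - \<tau> / 2 * w p * lap_h h w p)"

definition F :: "grid set" where
  "F = {w. periodic_grid N w \<and> (\<forall>p. - 1 \<le> U w p \<and> U w p \<le> 1)}"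

definition A :: "grid \<Rightarrow> grid \<Rightarrow> real" where
  "A w v = (\<Sum>p\<in>gbox N. - \<theta> * un p * (\<tau> * lap_h h v p)
     - \<epsilon>\<^sup>2 / 2 * (\<tau> * lap_h h v p * lap_h h (U w) p + U w p * (\<tau> * lap_h h (lap_h h v) p))
     - \<tau> / 2 * (v p * lap_h h w p + w p * lap_h h v p))"

definition B :: "grid \<Rightarrow> grid \<Rightarrow> real" where
  "B w v = (\<Sum>p\<in>gbox N. - \<epsilon>\<^sup>2 / 2 * (\<tau> * lap_h h v p) * (\<tau> * lap_h h (lap_h h v) p)
     - \<tau> / 2 * v p * lap_h h v p)"

lemma U_lin: "U (\<lambda>p. w p + t * v p) = (\<lambda>p. U w p + t * (\<tau> * lap_h h v p))"
  unfolding U_def lap_lin by (auto simp: algebra_simps)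

lemma lapU_lin: "lap_h h (U (\<lambda>p. w p + t * v p)) = (\<lambda>p. lap_h h (U w) p + t * (\<tau> * lap_h h (lap_h h v) p))"
  unfolding U_lin lap_lin lap_scale by simp

lemma K_expand:
  "K (\<lambda>p. w p + t * v p) = K w + A w v * t + B w v * t\<^sup>2
     + (\<Sum>p\<in>gbox N. phi (U w p + t * (\<tau> * lap_h h v p)) - phi (U w p))"
proof -
  have "K (\<lambda>p. w p + t * v p) = (\<Sum>p\<in>gbox N.
      (phi (U w p) - \<theta> * un p * U w p - \<epsilon>\<^sup>2 / 2 * U w p * lap_h h (U w) p - \<tau> / 2 * w p * lap_h h w p)
      + t * (- \<theta> * un p * (\<tau> * lap_h h v p)
         - \<epsilon>\<^sup>2 / 2 * (\<tau> * lap_h h v p * lap_h h (U w) p + U w p * (\<tau> * lap_h h (lap_h h v) p))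
         - \<tau> / 2 * (v p * lap_h h w p + w p * lap_h h v p))
      + t\<^sup>2 * (- \<epsilon>\<^sup>2 / 2 * (\<tau> * lap_h h v p) * (\<tau> * lap_h h (lap_h h v) p) - \<tau> / 2 * v p * lap_h h v p)
      + (phi (U w p + t * (\<tau> * lap_h h v p)) - phi (U w p)))"
    unfolding K_def U_lin lap_lin lap_scale
    by (rule sum.cong) (simp_all add: algebra_simps power2_eq_square)
  also have "\<dots> = K w + A w v * t + B w v * t\<^sup>2
     + (\<Sum>p\<in>gbox N. phi (U w p + t * (\<tau> * lap_h h v p)) - phi (U w p))"
    unfolding K_def A_def B_def by (rule sum4)
  finally show ?thesis .
qed

end



lemma lap_const: "lap_h h (\<lambda>p. c) = (\<lambda>p. 0)"
  by (simp add: lap_h_def fun_eq_iff split_def)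

definition Esum :: "nat \<Rightarrow> grid \<Rightarrow> real" where
  "Esum N z = (\<Sum>p\<in>gbox N. \<Sum>d\<in>dirs. (z (p + d) - z p)\<^sup>2)"

lemma Esum_nonneg: "0 \<le> Esum N z"
  unfolding Esum_def by (intro sum_nonneg) auto

lemma edge_le_Esum: "q \<in> gbox N \<Longrightarrow> d \<in> dirs \<Longrightarrow> (z (q + d) - z q)\<^sup>2 \<le> Esum N z"
  unfolding Esum_def
  by (rule order_trans[OF member_le_sum[of d dirs] member_le_sum[of q "gbox N"]])
     (auto intro: sum_nonneg)

lemma path_bound:
  fixes e :: real
  assumes per: "periodic_grid N w" and N1: "N \<ge> 1" and w0: "w (0, 0, 0) = 0"
    and e: "\<And>q d. q \<in> gbox N \<Longrightarrow> d \<in> dirs \<Longrightarrow> \<bar>w (q + d) - w q\<bar> \<le> e"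
  shows "\<bar>w p\<bar> \<le> 3 * real N * e"
proof -
  have e0: "0 \<le> e" using e[of "(0,0,0)" "(1,0,0)"] box_ne[OF N1] N1 by (auto simp: gbox_def dirs_def)
  have C1: "n < N \<longrightarrow> \<bar>w (int n, j, k) - w (0, j, k)\<bar> \<le> n * e"
    if "0 \<le> j" "j < int N" "0 \<le> k" "k < int N" for n j k
  proof (induct n)
    case (Suc n)
    show ?case
    proof
      assume n: "Suc n < N"
      have "\<bar>w ((int n, j, k) + (1,0,0)) - w (int n, j, k)\<bar> \<le> e"
        using e[of "(int n, j, k)" "(1,0,0)"] that n by (auto simp: gbox_def dirs_def)
      then have "\<bar>w (int (Suc n), j, k) - w (int n, j, k)\<bar> \<le> e" by (simp add: add.commute)
      then show "\<bar>w (int (Suc n), j, k) - w (0, j, k)\<bar> \<le> real (Suc n) * e"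
        using Suc n by (simp add: algebra_simps; linarith)
    qed
  qed simp
  have C2: "n < N \<longrightarrow> \<bar>w (0, int n, k) - w (0, 0, k)\<bar> \<le> n * e"
    if "0 \<le> k" "k < int N" for n k
  proof (induct n)
    case (Suc n)
    show ?case
    proof
      assume n: "Suc n < N"
      have "\<bar>w ((0, int n, k) + (0,1,0)) - w (0, int n, k)\<bar> \<le> e"
        using e[of "(0, int n, k)" "(0,1,0)"] that n by (auto simp: gbox_def dirs_def)
      then have "\<bar>w (0, int (Suc n), k) - w (0, int n, k)\<bar> \<le> e" by (simp add: add.commute)
      then show "\<bar>w (0, int (Suc n), k) - w (0, 0, k)\<bar> \<le> real (Suc n) * e"
        using Suc n by (simp add: algebra_simps; linarith)
    qed
  qed simp
  have C3: "n < N \<longrightarrow> \<bar>w (0, 0, int n) - w (0, 0, 0)\<bar> \<le> n * e" for n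
  proof (induct n)
    case (Suc n)
    show ?case
    proof
      assume n: "Suc n < N"
      have "\<bar>w ((0, 0, int n) + (0,0,1)) - w (0, 0, int n)\<bar> \<le> e"
        using e[of "(0, 0, int n)" "(0,0,1)"] n by (auto simp: gbox_def dirs_def)
      then have "\<bar>w (0, 0, int (Suc n)) - w (0, 0, int n)\<bar> \<le> e" by (simp add: add.commute)
      then show "\<bar>w (0, 0, int (Suc n)) - w (0, 0, 0)\<bar> \<le> real (Suc n) * e"
        using Suc n by (simp add: algebra_simps; linarith)
    qed
  qed simp
  obtain i j k where q: "pm N p = (i, j, k)" by (cases "pm N p") auto
  have ijk: "0 \<le> i" "i < int N" "0 \<le> j" "j < int N" "0 \<le> k" "k < int N"
    using pm_box[OF N1, of p] q by (auto simp: gbox_def)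
  have a: "\<bar>w (i, j, k) - w (0, j, k)\<bar> \<le> nat i * e" using C1[of j k "nat i"] ijk by simp
  have b: "\<bar>w (0, j, k) - w (0, 0, k)\<bar> \<le> nat j * e" using C2[of k "nat j"] ijk by simp
  have c: "\<bar>w (0, 0, k) - w (0, 0, 0)\<bar> \<le> nat k * e" using C3[of "nat k"] ijk by simp
  have "real (nat i) * e \<le> N * e" "real (nat j) * e \<le> N * e" "real (nat k) * e \<le> N * e"
    using ijk e0 by (auto intro!: mult_right_mono)
  then have "\<bar>w (i, j, k)\<bar> \<le> 3 * real N * e" using a b c w0 by linarith
  then show ?thesis using per_pm[OF per, of p] q by simp
qed

context chsys
begin

lemma U_per: "periodic_grid N w \<Longrightarrow> periodic_grid N (U w)"
  unfolding U_def by (rule per_comp2[OF unper per_lap]) 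

lemma K_shift: "periodic_grid N w \<Longrightarrow> K (\<lambda>p. w p + c) = K w"
proof -
  assume w: "periodic_grid N w"
  have "K (\<lambda>p. w p + c * 1) = K w + A w (\<lambda>p. 1) * c + B w (\<lambda>p. 1) * c\<^sup>2
     + (\<Sum>p\<in>gbox N. phi (U w p + c * (\<tau> * lap_h h (\<lambda>p. 1) p)) - phi (U w p))"
    by (rule K_expand)
  moreover have "A w (\<lambda>p. 1) = 0"
    unfolding A_def lap_const using lap_mass[OF w N1, of h]
    by (simp add: sum_negf sum_divide_distrib[symmetric] sum_distrib_left[symmetric])
  moreover have "B w (\<lambda>p. 1) = 0" unfolding B_def lap_const by simp
  ultimately show ?thesis by (simp add: lap_const)
qed

lemma K_split:
  "K w = (\<Sum>p\<in>gbox N. phi (U w p)) - (\<Sum>p\<in>gbox N. \<theta> * un p * U w p)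
     - \<epsilon>\<^sup>2 / 2 * (\<Sum>p\<in>gbox N. U w p * lap_h h (U w) p) - \<tau> / 2 * (\<Sum>p\<in>gbox N. w p * lap_h h w p)"
  unfolding K_def by (simp add: sum_subtractf sum_distrib_left mult.assoc)

lemma K_lower:
  assumes "w \<in> F"
  shows "- \<bar>\<theta>\<bar> * card (gbox N) + \<tau> / (4 * h\<^sup>2) * Esum N w \<le> K w"
proof -
  have w: "periodic_grid N w" "\<And>p. - 1 \<le> U w p \<and> U w p \<le> 1" using assms by (auto simp: F_def)
  have s1: "0 \<le> (\<Sum>p\<in>gbox N. phi (U w p))" using w(2) by (intro sum_nonneg phi_nonneg) auto
  have "\<theta> * un p * U w p \<le> \<bar>\<theta>\<bar>" for p
  proof -
    have "\<bar>un p\<bar> \<le> 1" "\<bar>U w p\<bar> \<le> 1" using unb[of p] w(2)[of p] by auto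
    then have "\<bar>un p\<bar> * \<bar>U w p\<bar> \<le> 1" by (intro mult_le_one) auto
    then have "\<bar>un p * U w p\<bar> \<le> 1" by (simp add: abs_mult)
    then have "\<bar>\<theta> * (un p * U w p)\<bar> \<le> \<bar>\<theta>\<bar>" by (simp add: abs_mult mult_left_le)
    then show ?thesis by (simp add: mult.assoc)
  qed
  then have s2: "(\<Sum>p\<in>gbox N. \<theta> * un p * U w p) \<le> card (gbox N) * \<bar>\<theta>\<bar>"
    using sum_bounded_above[of "gbox N" "\<lambda>p. \<theta> * un p * U w p" "\<bar>\<theta>\<bar>"] by simp
  have s3: "(\<Sum>p\<in>gbox N. U w p * lap_h h (U w) p) \<le> 0"
    using lap_energy[OF U_per[OF w(1)] N1, of h] Esum_nonneg[of N "U w"] hpos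
    unfolding Esum_def by (simp add: divide_nonpos_pos)
  have s4: "(\<Sum>p\<in>gbox N. w p * lap_h h w p) = - Esum N w / (2 * h\<^sup>2)"
    using lap_energy[OF w(1) N1, of h] unfolding Esum_def by simp
  have "\<epsilon>\<^sup>2 * (\<Sum>p\<in>gbox N. U w p * lap_h h (U w) p) \<le> 0" using s3 by (intro mult_nonneg_nonpos) auto
  then have e2: "0 \<le> \<epsilon>\<^sup>2 / 2 * - (\<Sum>p\<in>gbox N. U w p * lap_h h (U w) p)" by simp
  have "\<tau> / 2 * (Esum N w / (2 * h\<^sup>2)) = \<tau> / (4 * h\<^sup>2) * Esum N w" by (simp add: field_simps)
  then show ?thesis using K_split[of w] s1 s2 s4 e2 by (simp add: algebra_simps; linarith)
qed

end



lemma cont_lap2[continuous_intros]: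
  "(\<And>q. continuous_on S (\<lambda>w. f w q)) \<Longrightarrow> continuous_on S (\<lambda>w. lap_h h (f w) p)"
  by (cases p) (simp add: lap_h_def divide_inverse, intro continuous_intros, auto)

context chsys
begin

lemma U_zero: "U (\<lambda>p. 0) = un"
  unfolding U_def lap_const by simp

lemma zero_F: "(\<lambda>p. 0) \<in> F"
  using unb by (auto simp: F_def U_zero per_const less_imp_le)

definition Kb :: real where "Kb = K (\<lambda>p. 0) + \<bar>\<theta>\<bar> * card (gbox N)"
definition Mb :: real where "Mb = 3 * real N * sqrt (4 * h\<^sup>2 / \<tau> * Kb)"

lemma Esum_bound: "w \<in> F \<Longrightarrow> Esum N w \<le> 4 * h\<^sup>2 / \<tau> * (K w + \<bar>\<theta>\<bar> * card (gbox N))"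
proof -
  assume "w \<in> F"
  from K_lower[OF this] have "\<tau> / (4 * h\<^sup>2) * Esum N w \<le> K w + \<bar>\<theta>\<bar> * card (gbox N)" by simp
  then have "4 * h\<^sup>2 / \<tau> * (\<tau> / (4 * h\<^sup>2) * Esum N w) \<le> 4 * h\<^sup>2 / \<tau> * (K w + \<bar>\<theta>\<bar> * card (gbox N))"
    using taupos hpos by (intro mult_left_mono) auto
  then show ?thesis using taupos hpos by (simp add: field_simps)
qed

lemma Kb_nonneg: "0 \<le> Kb"
proof -
  have "0 \<le> 4 * h\<^sup>2 / \<tau> * Kb"
    using Esum_bound[OF zero_F] Esum_nonneg[of N "\<lambda>p. 0"] unfolding Kb_def by linarith
  moreover have "0 < 4 * h\<^sup>2 / \<tau>" using taupos hpos by simp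
  ultimately show ?thesis using mult_pos_neg[of "4 * h\<^sup>2 / \<tau>" Kb] by linarith
qed

lemma Mb_nonneg: "0 \<le> Mb"
  unfolding Mb_def using Kb_nonneg taupos by simp

lemma bound:
  assumes "w \<in> F" "w (0, 0, 0) = 0" "K w \<le> K (\<lambda>p. 0)"
  shows "\<bar>w p\<bar> \<le> Mb"
proof -
  have E: "Esum N w \<le> 4 * h\<^sup>2 / \<tau> * Kb"
  proof -
    have "Esum N w \<le> 4 * h\<^sup>2 / \<tau> * (K w + \<bar>\<theta>\<bar> * card (gbox N))" by (rule Esum_bound[OF assms(1)])
    also have "\<dots> \<le> 4 * h\<^sup>2 / \<tau> * Kb" unfolding Kb_def using assms(3) taupos
      by (intro mult_left_mono) auto
    finally show ?thesis .
  qed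
  have "\<bar>w (q + d) - w q\<bar> \<le> sqrt (4 * h\<^sup>2 / \<tau> * Kb)" if "q \<in> gbox N" "d \<in> dirs" for q d
  proof -
    have "(w (q + d) - w q)\<^sup>2 \<le> 4 * h\<^sup>2 / \<tau> * Kb" using edge_le_Esum[OF that, of w] E by linarith
    then have "sqrt ((w (q + d) - w q)\<^sup>2) \<le> sqrt (4 * h\<^sup>2 / \<tau> * Kb)" by (rule real_sqrt_le_mono)
    then show ?thesis by simp
  qed
  then show ?thesis unfolding Mb_def
    using path_bound[of N w "sqrt (4 * h\<^sup>2 / \<tau> * Kb)" p] assms N1 by (auto simp: F_def)
qed

lemma exists_min: "\<exists>w\<in>F. \<forall>w'\<in>F. K w \<le> K w'"
proof -
  define D where "D = (PiE UNIV (\<lambda>_::int\<times>int\<times>int. {-Mb..Mb})) \<inter> (F \<inter> {w. w (0, 0, 0) = 0})"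
  have cpt: "compact (PiE UNIV (\<lambda>_::int\<times>int\<times>int. {-Mb..Mb}))"
    using compactin_PiE[of "\<lambda>_. euclidean" UNIV "\<lambda>_::int\<times>int\<times>int. {-Mb..Mb}"]
    by (simp add: euclidean_product_topology)
  have cl: "closed (F \<inter> {w. w (0, 0, 0) = 0})"
  proof -
    have c1: "closed {w::grid. periodic_grid N w}"
      unfolding periodic_grid_def
      by (intro closed_Collect_all closed_Collect_conj closed_Collect_eq cont_eval)
    have c2: "closed {w::grid. \<forall>p. - 1 \<le> U w p \<and> U w p \<le> 1}"
      unfolding U_def
      by (intro closed_Collect_all closed_Collect_conj closed_Collect_le continuous_intros)
    have c3: "closed {w::grid. w (0, 0, 0) = 0}"
      by (intro closed_Collect_eq cont_eval continuous_intros)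
    have "F \<inter> {w. w (0, 0, 0) = 0} = {w::grid. periodic_grid N w} \<inter> {w::grid. \<forall>p. - 1 \<le> U w p \<and> U w p \<le> 1} \<inter> {w::grid. w (0, 0, 0) = 0}"
      unfolding F_def by blast
    then show ?thesis using c1 c2 c3 by (simp add: closed_Int)
  qed
  have D: "compact D" unfolding D_def using cpt cl by blast
  have "(\<lambda>p. 0) \<in> D" unfolding D_def using zero_F Mb_nonneg by (auto simp: PiE_iff)
  then have Dne: "D \<noteq> {}" by blast
  have DF: "D \<subseteq> F" unfolding D_def by blast
  have "continuous_on D K"
  proof -
    have c1: "continuous_on D (\<lambda>w. phi (U w p))" for p
    proof (rule continuous_on_compose2[OF phi_cont, of D "\<lambda>w. U w p"])
      show "continuous_on D (\<lambda>w. U w p)" unfolding U_def by (intro continuous_intros)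
      show "(\<lambda>w. U w p) ` D \<subseteq> {- 1..1}"
      proof
        fix x assume "x \<in> (\<lambda>w. U w p) ` D"
        then obtain w where w: "w \<in> D" "x = U w p" by blast
        then have "w \<in> F" using DF by blast
        then have "\<forall>p. - 1 \<le> U w p \<and> U w p \<le> 1" by (simp add: F_def)
        then show "x \<in> {- 1..1}" using w(2) by (cases p) auto
      qed
    qed
    show ?thesis unfolding K_def U_def
      by (intro continuous_on_sum continuous_intros c1[unfolded U_def])
  qed
  then obtain w0 where w0: "w0 \<in> D" "\<And>y. y \<in> D \<Longrightarrow> K w0 \<le> K y"
    using continuous_attains_inf[OF D Dne] by blast
  have "K w0 \<le> K w'" if w': "w' \<in> F" for w'
  proof -
    define w'' where "w'' = (\<lambda>p. w' p + - w' (0, 0, 0))"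
    have per: "periodic_grid N w'" using w' by (simp add: F_def)
    have Kw: "K w'' = K w'" unfolding w''_def by (rule K_shift[OF per])
    have Uw: "U w'' = U w'" unfolding w''_def U_def lap_addc by simp
    have perw: "periodic_grid N w''" unfolding w''_def by (rule per_comp1[OF per])
    have wF: "w'' \<in> F" using w' perw unfolding F_def by (simp add: Uw)
    have w0'': "w'' (0, 0, 0) = 0" by (simp add: w''_def)
    show ?thesis
    proof (cases "K w'' \<le> K (\<lambda>p. 0)")
      case True
      have B: "- Mb \<le> w'' p \<and> w'' p \<le> Mb" for p using bound[OF wF w0'' True, of p] by linarith
      have "w'' \<in> D" unfolding D_def using B wF w0'' by (simp add: PiE_iff)
      then show ?thesis using w0(2)[of w''] Kw by linarith
    next
      case False
      then show ?thesis using w0(2)[OF \<open>(\<lambda>p. 0) \<in> D\<close>] Kw by simp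
    qed
  qed
  then show ?thesis using w0(1) DF by blast
qed

end



lemma box_all: "periodic_grid N f \<Longrightarrow> N \<ge> 1 \<Longrightarrow> (\<And>q. q \<in> gbox N \<Longrightarrow> P (f q)) \<Longrightarrow> P (f p)"
  using per_pm[of N f p] pm_box[of N p] by metis

lemma lap_lin4: "lap_h h (\<lambda>q. a q - c * b q - d * e q - g q) p
   = lap_h h a p - c * lap_h h b p - d * lap_h h e p - lap_h h g p"
  by (cases p) (simp add: lap_h_def diff_divide_distrib add_divide_distrib algebra_simps)

lemma phi_chain: "-1 < c \<Longrightarrow> c < 1 \<Longrightarrow> ((\<lambda>t. phi (c + t * k)) has_real_derivative dphi c * k) (at 0)"
proof -
  assume c: "-1 < c" "c < 1"
  have d1: "DERIV phi (c + 0 * k) :> dphi c" using phi_deriv[OF c] by simp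
  have d2: "DERIV (\<lambda>t. c + t * k) 0 :> k" by (rule derivative_eq_intros refl | simp)+
  from DERIV_chain2[OF d1 d2] show ?thesis by simp
qed

context chsys
begin

definition mu :: "grid \<Rightarrow> grid" where
  "mu w = (\<lambda>q. dphi (U w q) - \<theta> * un q - \<epsilon>\<^sup>2 * lap_h h (U w) q - w q)"

lemma EL:
  assumes wF: "w \<in> F" and wmin: "\<And>w'. w' \<in> F \<Longrightarrow> K w \<le> K w'"
    and inner: "\<And>p. - 1 < U w p \<and> U w p < 1"
  shows "lap_h h (mu w) p = 0"
proof -
  have wper: "periodic_grid N w" using wF by (simp add: F_def)
  have Uper: "periodic_grid N (U w)" by (rule U_per[OF wper])
  have dUper: "periodic_grid N (\<lambda>q. dphi (U w q))" by (rule per_comp1[OF Uper])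
  have LUper: "periodic_grid N (lap_h h (U w))" by (rule per_lap[OF Uper])
  have muper: "periodic_grid N (mu w)" unfolding mu_def
    by (intro per_comp2[OF per_comp2[OF per_comp2[OF dUper unper] LUper] wper, where F = "\<lambda>x y. x - y"])
  have key: "(\<Sum>p\<in>gbox N. v p * lap_h h (mu w) p) = 0" if vper: "periodic_grid N v" for v
  proof -
    define \<eta> where "\<eta> = Min ((\<lambda>p. 1 - \<bar>U w p\<bar>) ` gbox N)"
    have fin: "finite ((\<lambda>p. 1 - \<bar>U w p\<bar>) ` gbox N)" "(\<lambda>p. 1 - \<bar>U w p\<bar>) ` gbox N \<noteq> {}"
      using box_ne[OF N1] by auto
    have eta_pos: "\<eta> > 0" unfolding \<eta>_def using inner fin
      by (subst Min_gr_iff) (auto simp: abs_less_iff)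
    have eta_le: "\<eta> \<le> 1 - \<bar>U w p\<bar>" for p
      using box_all[OF per_comp1[OF Uper], of "\<lambda>x. \<eta> \<le> 1 - x" "\<lambda>x. \<bar>x\<bar>", OF N1]
      unfolding \<eta>_def using Min_le[OF fin(1)] by auto
    define Mv where "Mv = (\<Sum>p\<in>gbox N. \<bar>lap_h h v p\<bar>) + 1"
    have Mv_pos: "Mv > 0" unfolding Mv_def by (simp add: add_nonneg_pos sum_nonneg)
    have Mv_ge: "\<bar>lap_h h v p\<bar> \<le> Mv" for p
    proof (rule box_all[OF per_comp1[OF per_lap[OF vper]] N1, of "\<lambda>x. x \<le> Mv" "\<lambda>x. \<bar>x\<bar>"])
      fix q assume "q \<in> gbox N"
      then have "\<bar>lap_h h v q\<bar> \<le> (\<Sum>p\<in>gbox N. \<bar>lap_h h v p\<bar>)"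
        by (intro member_le_sum) auto
      then show "\<bar>lap_h h v q\<bar> \<le> Mv" unfolding Mv_def by simp
    qed
    define \<delta> where "\<delta> = \<eta> / (\<tau> * Mv)"
    have d_pos: "\<delta> > 0" unfolding \<delta>_def using eta_pos taupos Mv_pos by simp
    define g where "g = (\<lambda>t. K w + A w v * t + B w v * t\<^sup>2
        + (\<Sum>p\<in>gbox N. phi (U w p + t * (\<tau> * lap_h h v p)) - phi (U w p)))"
    have gK: "g t = K (\<lambda>p. w p + t * v p)" for t unfolding g_def by (rule K_expand[symmetric])
    have g0: "g 0 = K w" unfolding g_def by simp
    have loc: "\<forall>y. \<bar>0 - y\<bar> < \<delta> \<longrightarrow> g 0 \<le> g y"
    proof (intro allI impI)
      fix y assume y: "\<bar>0 - y\<bar> < \<delta>"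
      have "(\<lambda>p. w p + y * v p) \<in> F"
        unfolding F_def
      proof (intro CollectI conjI allI)
        show "periodic_grid N (\<lambda>p. w p + y * v p)"
          by (rule per_comp2[OF wper vper, where F = "\<lambda>a b. a + y * b"])
        fix p
        have "\<bar>y * (\<tau> * lap_h h v p)\<bar> \<le> \<delta> * (\<tau> * Mv)"
          using y Mv_ge[of p] taupos by (simp add: abs_mult) (intro mult_mono, auto)
        also have "\<dots> = \<eta>" unfolding \<delta>_def using taupos Mv_pos by simp
        finally have "\<bar>y * (\<tau> * lap_h h v p)\<bar> \<le> \<eta>" .
        then show "- 1 \<le> U (\<lambda>p. w p + y * v p) p" "U (\<lambda>p. w p + y * v p) p \<le> 1"
          unfolding U_lin using eta_le[of p] by (simp_all add: abs_le_iff abs_diff_le_iff) linarith+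
      qed
      then show "g 0 \<le> g y" using wmin gK g0 by simp
    qed
    have der: "(g has_real_derivative (A w v + (\<Sum>p\<in>gbox N. dphi (U w p) * (\<tau> * lap_h h v p)))) (at 0)"
      unfolding g_def
      by (rule derivative_eq_intros refl phi_chain | use inner in simp)+
    have Z: "A w v + (\<Sum>p\<in>gbox N. dphi (U w p) * (\<tau> * lap_h h v p)) = 0"
      by (rule DERIV_local_min[OF der d_pos loc])
    have e1: "(\<Sum>p\<in>gbox N. U w p * lap_h h (lap_h h v) p) = (\<Sum>p\<in>gbox N. v p * lap_h h (lap_h h (U w)) p)"
      using lap_sym[OF Uper per_lap[OF vper] N1, of h] lap_sym[OF per_lap[OF Uper] vper N1, of h]
      by (simp add: mult.commute)
    have e1': "(\<Sum>p\<in>gbox N. lap_h h v p * lap_h h (U w) p) = (\<Sum>p\<in>gbox N. v p * lap_h h (lap_h h (U w)) p)"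
      using lap_sym[OF per_lap[OF Uper] vper N1, of h] by (simp add: mult.commute)
    have e2: "(\<Sum>p\<in>gbox N. w p * lap_h h v p) = (\<Sum>p\<in>gbox N. v p * lap_h h w p)"
      by (rule lap_sym[OF wper vper N1])
    have e3: "(\<Sum>p\<in>gbox N. un p * lap_h h v p) = (\<Sum>p\<in>gbox N. v p * lap_h h un p)"
      by (rule lap_sym[OF unper vper N1])
    have e4: "(\<Sum>p\<in>gbox N. dphi (U w p) * lap_h h v p) = (\<Sum>p\<in>gbox N. v p * lap_h h (\<lambda>q. dphi (U w q)) p)"
      by (rule lap_sym[OF dUper vper N1])
    have sA: "A w v = - \<theta> * \<tau> * (\<Sum>p\<in>gbox N. un p * lap_h h v p)
       - \<epsilon>\<^sup>2 / 2 * \<tau> * (\<Sum>p\<in>gbox N. lap_h h v p * lap_h h (U w) p)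
       - \<epsilon>\<^sup>2 / 2 * \<tau> * (\<Sum>p\<in>gbox N. U w p * lap_h h (lap_h h v) p)
       - \<tau> / 2 * (\<Sum>p\<in>gbox N. v p * lap_h h w p) - \<tau> / 2 * (\<Sum>p\<in>gbox N. w p * lap_h h v p)"
      unfolding A_def by (simp add: sum_subtractf sum.distrib sum_distrib_left algebra_simps)
    have sD: "(\<Sum>p\<in>gbox N. dphi (U w p) * (\<tau> * lap_h h v p)) = \<tau> * (\<Sum>p\<in>gbox N. dphi (U w p) * lap_h h v p)"
      by (simp add: sum_distrib_left algebra_simps)
    have sM: "(\<Sum>p\<in>gbox N. v p * lap_h h (mu w) p) = (\<Sum>p\<in>gbox N. v p * lap_h h (\<lambda>q. dphi (U w q)) p)
       - \<theta> * (\<Sum>p\<in>gbox N. v p * lap_h h un p) - \<epsilon>\<^sup>2 * (\<Sum>p\<in>gbox N. v p * lap_h h (lap_h h (U w)) p)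
       - (\<Sum>p\<in>gbox N. v p * lap_h h w p)"
      unfolding mu_def lap_lin4 by (simp add: sum_subtractf sum.distrib sum_distrib_left algebra_simps)
    have "\<tau> * (\<Sum>p\<in>gbox N. v p * lap_h h (mu w) p) = 0"
      using Z unfolding sA sD sM e1 e1' e2 e3 e4 by (simp add: algebra_simps)
    then show ?thesis using taupos by simp
  qed
  have "(\<Sum>p\<in>gbox N. lap_h h (mu w) p * lap_h h (mu w) p) = 0"
    by (rule key[OF per_lap[OF muper]])
  then have "\<forall>p\<in>gbox N. lap_h h (mu w) p * lap_h h (mu w) p = 0"
    by (subst sum_nonneg_eq_0_iff[symmetric]) auto
  then show ?thesis
    using box_all[OF per_lap[OF muper, of h] N1, of "\<lambda>x. x = 0" p] by simp
qed

end



context chsys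
begin

lemma mass: "periodic_grid N w \<Longrightarrow> (\<Sum>p\<in>gbox N. U w p) = (\<Sum>p\<in>gbox N. un p)"
  unfolding U_def using lap_mass[of N w h] N1 by (simp add: sum.distrib sum_distrib_left[symmetric])

lemma no_top:
  assumes wF: "w \<in> F" and wmin: "\<And>w'. w' \<in> F \<Longrightarrow> K w \<le> K w'"
  shows "U w p < 1"
proof (rule ccontr)
  assume "\<not> U w p < 1"
  have wper: "periodic_grid N w" using wF by (simp add: F_def)
  have Ub: "- 1 \<le> U w q \<and> U w q \<le> 1" for q using wF unfolding F_def mem_Collect_eq by blast
  have p1: "U w p = 1" using Ub[of p] \<open>\<not> U w p < 1\<close> by linarith
  have Uper: "periodic_grid N (U w)" by (rule U_per[OF wper])
  define v where "v = (\<lambda>q. if U w q = 1 then 1 else (0::real))"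
  have vper: "periodic_grid N v" unfolding v_def by (rule per_comp1[OF Uper])
  have h2: "h\<^sup>2 > 0" using hpos by simp
  have v01: "0 \<le> v q" "v q \<le> 1" for q unfolding v_def by auto
  have sv: "0 \<le> (\<Sum>d\<in>dirs. v (q + d))" "(\<Sum>d\<in>dirs. v (q + d)) \<le> 6" for q
    using sum_nonneg[of dirs "\<lambda>d. v (q + d)"] sum_bounded_above[of dirs "\<lambda>d. v (q + d)" 1] v01
    by (auto simp: card_dirs)
  have La: "- 6 / h\<^sup>2 \<le> lap_h h v q \<and> lap_h h v q \<le> 0" if "U w q = 1" for q
    using sv[of q] that h2 unfolding lap_alt by (simp add: v_def divide_le_0_iff divide_le_eq_1 field_simps)
  have Lb: "0 \<le> lap_h h v q \<and> lap_h h v q \<le> 6 / h\<^sup>2" if "U w q \<noteq> 1" for q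
    using sv[of q] that h2 unfolding lap_alt by (simp add: v_def field_simps)
  have Lc: "lap_h h v q \<le> - 1 / h\<^sup>2" if "U w q = 1" "d0 \<in> dirs" "U w (q + d0) \<noteq> 1" for q d0
  proof -
    have "(\<Sum>d\<in>dirs. v (q + d)) = v (q + d0) + (\<Sum>d\<in>dirs - {d0}. v (q + d))"
      using that(2) by (simp add: sum.remove)
    also have "\<dots> \<le> 0 + 5"
    proof (rule add_mono)
      show "v (q + d0) \<le> 0" using that(3) by (simp add: v_def)
      have "(\<Sum>d\<in>dirs - {d0}. v (q + d)) \<le> card (dirs - {d0}) * 1"
        using sum_bounded_above[of "dirs - {d0}" "\<lambda>d. v (q + d)" 1] v01 by auto
      then show "(\<Sum>d\<in>dirs - {d0}. v (q + d)) \<le> 5" using that(2) by (simp add: card_dirs)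
    qed
    finally have "(\<Sum>d\<in>dirs. v (q + d)) - 6 * v q \<le> - 1" using that(1) by (simp add: v_def)
    then have "((\<Sum>d\<in>dirs. v (q + d)) - 6 * v q) / h\<^sup>2 \<le> - 1 / h\<^sup>2"
      using h2 by (intro divide_right_mono) auto
    then show ?thesis unfolding lap_alt by simp
  qed
  have "\<exists>q d0. U w q = 1 \<and> d0 \<in> dirs \<and> U w (q + d0) \<noteq> 1"
  proof (rule ccontr)
    assume "\<not> ?thesis"
    then have cl: "U w q = 1 \<Longrightarrow> d \<in> dirs \<Longrightarrow> U w (q + d) = 1" for q d by blast
    have all1: "U w q = 1" for q
      by (rule conn[of "\<lambda>q. U w q = 1" "fst p" "fst (snd p)" "snd (snd p)"]) (use p1 cl in auto)
    have "(\<Sum>q\<in>gbox N. un q) < (\<Sum>q\<in>gbox N. 1)"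
      using unb box_ne[OF N1] by (intro sum_strict_mono) auto
    then show False using mass[OF wper] all1 by simp
  qed
  then obtain q1 d0 where q1: "U w q1 = 1" "d0 \<in> dirs" "U w (q1 + d0) \<noteq> 1" by blast
  define q0 where "q0 = pm N q1"
  have q0box: "q0 \<in> gbox N" unfolding q0_def by (rule pm_box[OF N1])
  have q0U: "U w q0 = 1" using per_pm[OF Uper, of q1] q1 unfolding q0_def by simp
  have q0L: "lap_h h v q0 \<le> - 1 / h\<^sup>2"
    using per_pm[OF per_lap[OF vper, of h], of q1] Lc[OF q1] unfolding q0_def by simp
  define \<eta>0 where "\<eta>0 = Min ((\<lambda>q. if U w q = 1 then 1 else 1 - U w q) ` gbox N)"
  have fin: "finite ((\<lambda>q. if U w q = 1 then 1 else 1 - U w q) ` gbox N)"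
    "(\<lambda>q. if U w q = 1 then 1 else 1 - U w q) ` gbox N \<noteq> {}" using box_ne[OF N1] by auto
  have pos: "0 < (if U w q = 1 then 1 else 1 - U w q)" for q
    using Ub[of q] by (cases "U w q = 1") auto
  have eta0_pos: "\<eta>0 > 0" unfolding \<eta>0_def Min_gr_iff[OF fin] using pos by blast
  have eta0_le: "\<eta>0 \<le> (if U w q = 1 then 1 else 1 - U w q)" for q
    using box_all[OF per_comp1[OF Uper] N1, of "\<lambda>x. \<eta>0 \<le> x" "\<lambda>x. if x = 1 then 1 else 1 - x" q]
      Min_le[OF fin(1)] unfolding \<eta>0_def by auto
  define \<eta> where "\<eta> = min 1 \<eta>0"
  have eta: "0 < \<eta>" "\<eta> \<le> 1" using eta0_pos by (auto simp: \<eta>_def)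
  have eta_le: "U w q \<le> 1 - \<eta>" if "U w q \<noteq> 1" for q
    using eta0_le[of q] that unfolding \<eta>_def by auto
  define C\<eta> where "C\<eta> = \<bar>dphi (1 - \<eta> / 2)\<bar>"
  have Ceta: "0 \<le> C\<eta>" unfolding C\<eta>_def by simp
  define c6 where "c6 = 6 * \<tau> / h\<^sup>2"
  have c6: "c6 > 0" unfolding c6_def using taupos h2 by simp
  define C where "C = \<bar>A w v\<bar> + \<bar>B w v\<bar> + card (gbox N) * (c6 * C\<eta>)"
  define X where "X = C * h\<^sup>2 / \<tau>"
  define t where "t = min 1 (min (\<eta> / (2 * c6)) (exp (- X - 1) / c6))"
  have t: "0 < t" "t \<le> 1" "c6 * t \<le> \<eta> / 2" "c6 * t \<le> exp (- X - 1)"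
  proof -
    show "0 < t" unfolding t_def using eta c6 by simp
    show "t \<le> 1" unfolding t_def by simp
    have "t \<le> \<eta> / (2 * c6)" unfolding t_def by simp
    then show "c6 * t \<le> \<eta> / 2" using c6 by (simp add: field_simps)
    have "t \<le> exp (- X - 1) / c6" unfolding t_def by simp
    then show "c6 * t \<le> exp (- X - 1)" using c6 by (simp add: field_simps)
  qed
  have ct1: "c6 * t \<le> 1 / 2" using t(3) eta by simp
  have tL: "- (c6 * t) \<le> t * (\<tau> * lap_h h v q) \<and> t * (\<tau> * lap_h h v q) \<le> 0" if "U w q = 1" for q
  proof -
    have a1: "- 6 / h\<^sup>2 \<le> lap_h h v q" and a2: "lap_h h v q \<le> 0" using La[OF that] by auto
    have tt: "0 \<le> t * \<tau>" using t(1) taupos by simp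
    have "t * \<tau> * (- 6 / h\<^sup>2) \<le> t * \<tau> * lap_h h v q" by (rule mult_left_mono[OF a1 tt])
    moreover have "t * \<tau> * lap_h h v q \<le> 0" by (rule mult_nonneg_nonpos[OF tt a2])
    ultimately have "t * \<tau> * (- 6 / h\<^sup>2) \<le> t * \<tau> * lap_h h v q" "t * \<tau> * lap_h h v q \<le> 0" by auto
    then show ?thesis unfolding c6_def by (simp add: field_simps)
  qed
  have tL': "0 \<le> t * (\<tau> * lap_h h v q) \<and> t * (\<tau> * lap_h h v q) \<le> c6 * t" if "U w q \<noteq> 1" for q
  proof -
    have a1: "0 \<le> lap_h h v q" and a2: "lap_h h v q \<le> 6 / h\<^sup>2" using Lb[OF that] by auto
    have tt: "0 \<le> t * \<tau>" using t(1) taupos by simp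
    have "0 \<le> t * \<tau> * lap_h h v q" by (rule mult_nonneg_nonneg[OF tt a1])
    moreover have "t * \<tau> * lap_h h v q \<le> t * \<tau> * (6 / h\<^sup>2)" by (rule mult_left_mono[OF a2 tt])
    ultimately have "0 \<le> t * \<tau> * lap_h h v q" "t * \<tau> * lap_h h v q \<le> t * \<tau> * (6 / h\<^sup>2)" by auto
    then show ?thesis unfolding c6_def by (simp add: field_simps)
  qed
  have wtF: "(\<lambda>q. w q + t * v q) \<in> F"
    unfolding F_def
  proof (intro CollectI conjI allI)
    show "periodic_grid N (\<lambda>q. w q + t * v q)"
      by (rule per_comp2[OF wper vper, where F = "\<lambda>a b. a + t * b"])
    fix q
    show "- 1 \<le> U (\<lambda>q. w q + t * v q) q" "U (\<lambda>q. w q + t * v q) q \<le> 1"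
      unfolding U_lin using tL[of q] tL'[of q] Ub[of q] eta_le[of q] ct1 t(3)
      by (cases "U w q = 1"; simp; linarith)+
  qed
  define T where "T = (\<lambda>q. phi (U w q + t * (\<tau> * lap_h h v q)) - phi (U w q))"
  have Tle: "T q \<le> c6 * t * C\<eta>" for q
  proof (cases "U w q = 1")
    case True
    have "T q \<le> 0"
      using phi_top_nonpos[of "- (t * (\<tau> * lap_h h v q))"] tL[OF True] ct1 True
      unfolding T_def by simp
    moreover have "0 \<le> c6 * t * C\<eta>" using c6 t(1) Ceta by simp
    ultimately show ?thesis by linarith
  next
    case False
    have "T q \<le> t * (\<tau> * lap_h h v q) * \<bar>dphi (1 - \<eta> / 2)\<bar>"
      unfolding T_def
      by (rule phi_up) (use Ub[of q] tL'[OF False] eta_le[OF False] t(3) eta in auto)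
    also have "\<dots> \<le> c6 * t * C\<eta>" unfolding C\<eta>_def using tL'[OF False] by (intro mult_right_mono) auto
    finally show ?thesis .
  qed
  define s0 where "s0 = - (t * (\<tau> * lap_h h v q0))"
  have s0: "t * \<tau> / h\<^sup>2 \<le> s0" "s0 \<le> c6 * t"
  proof -
    have "t * \<tau> * lap_h h v q0 \<le> t * \<tau> * (- 1 / h\<^sup>2)" using q0L t(1) taupos by (intro mult_left_mono) auto
    then show "t * \<tau> / h\<^sup>2 \<le> s0" unfolding s0_def by (simp add: field_simps)
    show "s0 \<le> c6 * t" using tL[OF q0U] unfolding s0_def by simp
  qed
  have s0pos: "0 < s0" using s0(1) t(1) taupos h2 by (smt (verit) divide_pos_pos mult_pos_pos)
  have lnc: "ln (c6 * t) \<le> - X - 1"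
    using t(4) c6 t(1) by (subst ln_exp[symmetric]) (intro ln_mono, auto)
  have Tq0: "T q0 \<le> t * \<tau> / h\<^sup>2 * (- X - 1)"
  proof -
    have "T q0 = phi (1 - s0) - phi 1" unfolding T_def s0_def q0U by simp
    also have "\<dots> \<le> - s0 * (ln (2 - s0) - ln s0)" by (rule phi_top) (use s0pos s0(2) ct1 in auto)
    also have "\<dots> \<le> s0 * ln s0"
    proof -
      have "0 \<le> ln (2 - s0)" using s0(2) ct1 by simp
      then show ?thesis using s0pos by (simp add: algebra_simps)
    qed
    also have "\<dots> \<le> s0 * ln (c6 * t)" using s0pos s0(2) by (intro mult_left_mono ln_mono) auto
    also have "\<dots> \<le> s0 * (- X - 1)" using s0pos lnc by (intro mult_left_mono) auto
    also have "\<dots> \<le> t * \<tau> / h\<^sup>2 * (- X - 1)"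
    proof -
      have "0 \<le> X" unfolding X_def C_def using taupos Ceta c6 by (intro divide_nonneg_pos mult_nonneg_nonneg) auto
      then show ?thesis using s0(1) by (intro mult_right_mono_neg) auto
    qed
    finally show ?thesis .
  qed
  have sumT: "(\<Sum>q\<in>gbox N. T q) \<le> t * \<tau> / h\<^sup>2 * (- X - 1) + card (gbox N) * (c6 * t * C\<eta>)"
  proof -
    have "(\<Sum>q\<in>gbox N. T q) = T q0 + (\<Sum>q\<in>gbox N - {q0}. T q)" using q0box by (simp add: sum.remove)
    also have "(\<Sum>q\<in>gbox N - {q0}. T q) \<le> card (gbox N - {q0}) * (c6 * t * C\<eta>)"
      using sum_bounded_above[of "gbox N - {q0}" T "c6 * t * C\<eta>"] Tle by auto
    also have "\<dots> \<le> card (gbox N) * (c6 * t * C\<eta>)"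
      using c6 t(1) Ceta by (intro mult_right_mono) (auto intro: card_mono)
    finally show ?thesis using Tq0 by linarith
  qed
  have expand: "K (\<lambda>q. w q + t * v q) = K w + A w v * t + B w v * t\<^sup>2 + (\<Sum>q\<in>gbox N. T q)"
    unfolding T_def by (rule K_expand)
  have "A w v * t + B w v * t\<^sup>2 \<le> (\<bar>A w v\<bar> + \<bar>B w v\<bar>) * t"
  proof -
    have "A w v * t \<le> \<bar>A w v\<bar> * t" using t(1) by (intro mult_right_mono) auto
    moreover have "B w v * t\<^sup>2 \<le> \<bar>B w v\<bar> * t"
    proof -
      have "t\<^sup>2 \<le> t" using t(1,2) by (simp add: power2_eq_square mult_left_le)
      then have "B w v * t\<^sup>2 \<le> \<bar>B w v\<bar> * t\<^sup>2" by (intro mult_right_mono) auto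
      also have "\<dots> \<le> \<bar>B w v\<bar> * t" using \<open>t\<^sup>2 \<le> t\<close> by (intro mult_left_mono) auto
      finally show ?thesis .
    qed
    ultimately show ?thesis by (simp add: algebra_simps)
  qed
  moreover have "t * \<tau> / h\<^sup>2 * (- X - 1) = - (C * t) - t * \<tau> / h\<^sup>2"
    unfolding X_def using taupos h2 by (simp add: field_simps)
  moreover have "(\<bar>A w v\<bar> + \<bar>B w v\<bar>) * t + card (gbox N) * (c6 * t * C\<eta>) = C * t"
    unfolding C_def by (simp add: algebra_simps)
  moreover have "0 < t * \<tau> / h\<^sup>2" using t(1) taupos h2 by simp
  ultimately have "K (\<lambda>q. w q + t * v q) < K w" using expand sumT by linarith
  then show False using wmin[OF wtF] by simp
qed

end



lemma per_neg: "periodic_grid N (\<lambda>p. - x p) \<longleftrightarrow> periodic_grid N x"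
  unfolding periodic_grid_def by simp

context chsys
begin

lemma no_bottom:
  assumes wF: "w \<in> F" and wmin: "\<And>w'. w' \<in> F \<Longrightarrow> K w \<le> K w'"
  shows "- 1 < U w p"
proof -
  interpret neg: chsys N h \<tau> \<epsilon> \<theta> "\<lambda>p. - un p"
    by unfold_locales (use N1 hpos taupos unb per_comp1[OF unper] in auto)
  have negU: "neg.U (\<lambda>p. - x p) = (\<lambda>p. - U x p)" for x
    unfolding neg.U_def U_def lap_neg by auto
  have negK: "neg.K (\<lambda>p. - x p) = K x" for x
    unfolding neg.K_def K_def negU lap_neg by (simp add: phi_even)
  have negF: "(\<lambda>p. - x p) \<in> neg.F \<longleftrightarrow> x \<in> F" for x
    unfolding neg.F_def F_def mem_Collect_eq negU per_neg by auto
  have "(\<lambda>p. - w p) \<in> neg.F" using negF wF by simp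
  moreover have "neg.K (\<lambda>p. - w p) \<le> neg.K w'" if "w' \<in> neg.F" for w'
  proof -
    have e: "(\<lambda>p. - (- w' p)) = w'" by simp
    have "(\<lambda>p. - w' p) \<in> F" using negF[of "\<lambda>p. - w' p"] that e by simp
    then have "K w \<le> K (\<lambda>p. - w' p)" by (rule wmin)
    then show ?thesis using negK[of w] negK[of "\<lambda>p. - w' p"] e by simp
  qed
  ultimately have "neg.U (\<lambda>p. - w p) p < 1" by (rule neg.no_top)
  then show ?thesis unfolding negU by simp
qed

lemma solution:
  "\<exists>W. periodic_grid N W \<and> (\<forall>p. - 1 < U W p \<and> U W p < 1)
     \<and> (\<forall>p. \<tau> * lap_h h W p = U W p - un p)
     \<and> (\<forall>p. W p = dphi (U W p) - \<theta> * un p - \<epsilon>\<^sup>2 * lap_h h (U W) p)"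
proof -
  obtain w where wF: "w \<in> F" and wmin: "\<And>w'. w' \<in> F \<Longrightarrow> K w \<le> K w'"
    using exists_min by blast
  have inner: "- 1 < U w p \<and> U w p < 1" for p
    using no_top[OF wF wmin] no_bottom[OF wF wmin] by blast
  have wper: "periodic_grid N w" using wF by (simp add: F_def)
  have Uper: "periodic_grid N (U w)" by (rule U_per[OF wper])
  have muper: "periodic_grid N (mu w)" unfolding mu_def
    by (intro per_comp2[OF per_comp2[OF per_comp2[OF per_comp1[OF Uper] unper] per_lap[OF Uper]] wper,
        where F = "\<lambda>x y. x - y"])
  have L0: "lap_h h (mu w) p = 0" for p by (rule EL[OF wF wmin inner])
  define c where "c = mu w (0, 0, 0)"
  have muc: "mu w p = c" for p unfolding c_def
    by (rule liouville[OF muper N1, where h = h]) (use hpos L0 in auto)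
  define W where "W = (\<lambda>p. w p + c)"
  have UW: "U W = U w" unfolding W_def U_def lap_addc by simp
  have LW: "lap_h h W = lap_h h w" unfolding W_def lap_addc by simp
  show ?thesis
  proof (intro exI conjI allI)
    show "periodic_grid N W" unfolding W_def by (rule per_comp1[OF wper])
    fix p
    show "- 1 < U W p" "U W p < 1" using inner[of p] UW by auto
    show "\<tau> * lap_h h W p = U W p - un p" unfolding LW UW U_def by simp
    show "W p = dphi (U W p) - \<theta> * un p - \<epsilon>\<^sup>2 * lap_h h (U W) p"
      using muc[of p] unfolding UW unfolding W_def mu_def by linarith
  qed
qed

end

theorem mainTheorem1:
  fixes L \<epsilon> \<theta>\<^sub>0 \<tau> \<alpha> h :: real and N :: nat and un :: grid
  assumes "L > 0" and "N \<ge> 1" and "h = L / real N"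
    and "\<epsilon> > 0" and "\<theta>\<^sub>0 > 0" and "\<tau> > 0" and "0 < \<alpha>" and "\<alpha> < 1"
    and "periodic_grid N un"
    and "\<forall>p. - 1 < un p \<and> un p < 1"
  shows "\<exists>u1 w1 u2 w2 u3 w3 :: grid.
     periodic_grid N u1 \<and> periodic_grid N w1 \<and> periodic_grid N u2 \<and>
     periodic_grid N w2 \<and> periodic_grid N u3 \<and> periodic_grid N w3 \<and>
     (\<forall>p. - 1 < u2 p \<and> u2 p < 1) \<and>
     (\<forall>p. - (\<epsilon>\<^sup>2 * lap_h h u1 p) - \<alpha> * w1 p + u3 p = 0) \<and>
     (\<forall>p. \<alpha> * (- u1 p + un p) + \<tau> * lap_h h w1 p - w3 p = 0) \<and>
     (\<forall>p. ln (1 + u2 p) - ln (1 - u2 p) - \<theta>\<^sub>0 * un p - (1 - \<alpha>) * w2 p - u3 p = 0) \<and>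
     (\<forall>p. (1 - \<alpha>) * (- u2 p + un p) + w3 p = 0) \<and>
     (\<forall>p. u1 p - u2 p = 0) \<and>
     (\<forall>p. w1 p - w2 p = 0)"
proof -
  have hpos: "h > 0" using assms(1,2,3) by simp
  interpret cs: chsys N h \<tau> \<epsilon> \<theta>\<^sub>0 un
    by unfold_locales (use assms hpos in auto)
  obtain W where W: "periodic_grid N W" "\<And>p. - 1 < cs.U W p \<and> cs.U W p < 1"
     "\<And>p. \<tau> * lap_h h W p = cs.U W p - un p"
     "\<And>p. W p = dphi (cs.U W p) - \<theta>\<^sub>0 * un p - \<epsilon>\<^sup>2 * lap_h h (cs.U W) p"
    using cs.solution by blast
  define u where "u = cs.U W"
  have uper: "periodic_grid N u" unfolding u_def by (rule cs.U_per[OF W(1)])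
  define u3 where "u3 = (\<lambda>p. \<epsilon>\<^sup>2 * lap_h h u p + \<alpha> * W p)"
  define w3 where "w3 = (\<lambda>p. (1 - \<alpha>) * (u p - un p))"
  have u3per: "periodic_grid N u3" unfolding u3_def
    by (rule per_comp2[OF per_lap[OF uper] W(1), where F = "\<lambda>x y. \<epsilon>\<^sup>2 * x + \<alpha> * y"])
  have w3per: "periodic_grid N w3" unfolding w3_def
    by (rule per_comp2[OF uper assms(9), where F = "\<lambda>x y. (1 - \<alpha>) * (x - y)"])
  show ?thesis
  proof (rule exI[of _ u], rule exI[of _ W], rule exI[of _ u], rule exI[of _ W],
         rule exI[of _ u3], rule exI[of _ w3], intro conjI allI)
    fix p
    have Wp: "W p = ln (1 + u p) - ln (1 - u p) - \<theta>\<^sub>0 * un p - \<epsilon>\<^sup>2 * lap_h h u p"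
      using W(4)[of p] unfolding u_def dphi_def by simp
    have Lp: "\<tau> * lap_h h W p = u p - un p" using W(3)[of p] unfolding u_def by simp
    show "- 1 < u p" "u p < 1" using W(2)[of p] unfolding u_def by auto
    show "- (\<epsilon>\<^sup>2 * lap_h h u p) - \<alpha> * W p + u3 p = 0" unfolding u3_def by simp
    show "\<alpha> * (- u p + un p) + \<tau> * lap_h h W p - w3 p = 0" unfolding w3_def Lp by (simp add: algebra_simps)
    show "ln (1 + u p) - ln (1 - u p) - \<theta>\<^sub>0 * un p - (1 - \<alpha>) * W p - u3 p = 0"
      unfolding u3_def using Wp by (simp add: algebra_simps)
    show "(1 - \<alpha>) * (- u p + un p) + w3 p = 0" unfolding w3_def by (simp add: algebra_simps)
  qed (use uper W(1) u3per w3per in auto)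
qed

end
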